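(* There is an absolute constant $C$ such that for every $n\ge 2$ there exists an $n\times n$ matrix $A$ over $GF(2)$ such that the map $\phi(x)=Ax$ is a mapping from ${\sf Dictator}$ to ${\sf XOR}$ on $\{0,1\}^n$, every output bit of $\phi$ depends on at most $3$ input bits, $\phi$ is $2$-Lipschitz, and $\phi^{-1}$ is $C\log n$-Lipschitz.
   Context: ${\sf Dictator}(x)=x_1$ and ${\sf XOR}(x)=\sum_{i=1}^n x_i \bmod 2$ on $\{0,1\}^n$. A mapping from $f$ to $g$ is a bijection $\psi$ of $\{0,1\}^n$ with $f(z)=g(\psi(z))$ for all $z$. A map is $L$-Lipschitz if it increases Hamming distances by a factor at most $L$. An output bit depends on at most $3$ input bits means it is a function of some fixed set of at most $3$ input coordinates. *)

theory Defs
  imports Complex_Main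
begin

text \<open>Points of {0,1}^n are modelled as functions nat => bool that are False
  outside the coordinates 0..n-1 (True = 1). Coordinate x_1 of the paper is index 0.\<close>

definition cube :: "nat \<Rightarrow> (nat \<Rightarrow> bool) set" where
  "cube n = {x. \<forall>i\<ge>n. x i = False}"

definition hamming :: "nat \<Rightarrow> (nat \<Rightarrow> bool) \<Rightarrow> (nat \<Rightarrow> bool) \<Rightarrow> nat" where
  "hamming n x y = card {i. i < n \<and> x i \<noteq> y i}"

definition Dictator :: "(nat \<Rightarrow> bool) \<Rightarrow> bool" where
  "Dictator x = x 0"

definition XOR :: "nat \<Rightarrow> (nat \<Rightarrow> bool) \<Rightarrow> bool" where
  "XOR n x = odd (card {i. i < n \<and> x i})"

definition matvec :: "nat \<Rightarrow> (nat \<Rightarrow> nat \<Rightarrow> bool) \<Rightarrow> (nat \<Rightarrow> bool) \<Rightarrow> (nat \<Rightarrow> bool)" where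
  "matvec n A x = (\<lambda>i. i < n \<and> odd (card {j. j < n \<and> A i j \<and> x j}))"

definition is_mapping :: "nat \<Rightarrow> ((nat \<Rightarrow> bool) \<Rightarrow> bool) \<Rightarrow> ((nat \<Rightarrow> bool) \<Rightarrow> bool)
    \<Rightarrow> ((nat \<Rightarrow> bool) \<Rightarrow> (nat \<Rightarrow> bool)) \<Rightarrow> bool" where
  "is_mapping n f g \<psi> \<longleftrightarrow> bij_betw \<psi> (cube n) (cube n) \<and> (\<forall>z\<in>cube n. f z = g (\<psi> z))"

definition lipschitz_cube :: "nat \<Rightarrow> real \<Rightarrow> ((nat \<Rightarrow> bool) \<Rightarrow> (nat \<Rightarrow> bool)) \<Rightarrow> bool" where
  "lipschitz_cube n L \<psi> \<longleftrightarrow>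
     (\<forall>x\<in>cube n. \<forall>y\<in>cube n. real (hamming n (\<psi> x) (\<psi> y)) \<le> L * real (hamming n x y))"

definition output_depends_on_at_most :: "nat \<Rightarrow> nat \<Rightarrow> ((nat \<Rightarrow> bool) \<Rightarrow> (nat \<Rightarrow> bool)) \<Rightarrow> bool" where
  "output_depends_on_at_most n k \<psi> \<longleftrightarrow>
     (\<forall>i<n. \<exists>S. S \<subseteq> {..<n} \<and> card S \<le> k \<and>
        (\<forall>x\<in>cube n. \<forall>y\<in>cube n. (\<forall>j\<in>S. x j = y j) \<longrightarrow> \<psi> x i = \<psi> y i))"

end

theory Submission imports Defs begin

definition Ah :: "nat \<Rightarrow> nat \<Rightarrow> bool" where
  "Ah i j = (j = i \<or> j = 2*i+1 \<or> j = 2*i+2)"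

lemma cubeD: "x \<in> cube n \<Longrightarrow> \<not> i < n \<Longrightarrow> x i = False"
  by (simp add: cube_def)

lemma ln2_ge: "ln (2::real) \<ge> 1/2"
proof -
  have "ln (1 - 1/2::real) \<le> - (1/2)" by (rule ln_one_minus_pos_upper_bound) auto
  moreover have "ln (1 - 1/2::real) = - ln 2" by (simp add: ln_div)
  ultimately show ?thesis by simp
qed

lemma step:
  assumes "x \<in> cube n"
  shows "matvec n Ah x i = (i < n \<and> (x i \<noteq> (x(2*i+1) \<noteq> x(2*i+2))))"
proof (cases "i < n")
  case True
  have "{j. j < n \<and> Ah i j \<and> x j} = {j\<in>{i,2*i+1,2*i+2}. x j}"
    using True cubeD[OF assms] by (auto simp: Ah_def)
  also have "\<dots> = (if x i then {i} else {}) \<union> (if x (2*i+1) then {2*i+1} else {}) \<union> (if x (2*i+2) then {2*i+2} else {})"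
    by auto
  finally have e: "{j. j < n \<and> Ah i j \<and> x j} = \<dots>" .
  show ?thesis using True unfolding matvec_def e
    by (cases "x i"; cases "x (2*i+1)"; cases "x (2*i+2)"; simp)
next
  case False thus ?thesis by (simp add: matvec_def)
qed

lemma cube_finite: "finite (cube n)"
proof -
  have "cube n \<subseteq> (\<lambda>S i. i \<in> S) ` Pow {..<n}"
  proof
    fix x assume "x \<in> cube n"
    hence "x = (\<lambda>i. i \<in> {i. i < n \<and> x i})" using cubeD by fastforce
    thus "x \<in> (\<lambda>S i. i \<in> S) ` Pow {..<n}" by blast
  qed
  thus ?thesis by (rule finite_subset) auto
qed

fun ancs :: "nat \<Rightarrow> nat set" where
  "ancs 0 = {0}"
| "ancs (Suc j) = insert (Suc j) (ancs (j div 2))"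

lemma ancs_finite: "finite (ancs j)"
  by (induction j rule: ancs.induct) auto

lemma ancs_self: "j \<in> ancs j"
  by (cases j) auto

lemma ancs_parent: "c \<in> ancs j \<Longrightarrow> c = 2*i+1 \<or> c = 2*i+2 \<Longrightarrow> i \<in> ancs j"
proof (induction j rule: ancs.induct)
  case 1 thus ?case by auto
next
  case (2 j)
  show ?case
  proof (cases "c = Suc j")
    case True
    hence "i = j div 2" using 2(3) by auto
    thus ?thesis using ancs_self by simp
  next
    case False
    thus ?thesis using 2 by auto
  qed
qed

lemma ancs_card: "j + 1 < 2^k \<Longrightarrow> card (ancs j) \<le> k"
proof (induction j arbitrary: k rule: ancs.induct)
  case 1
  then have "k \<ge> 1" by (cases k) auto
  thus ?case by simp
next
  case (2 j)
  then obtain k' where k: "k = Suc k'" by (cases k) auto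
  have "j div 2 + 1 < 2^k'" using 2(2) k by auto
  hence "card (ancs (j div 2)) \<le> k'" by (rule 2(1))
  thus ?case using k by (simp add: card_insert_if ancs_finite)
qed


lemma cover_inv:
  assumes x: "x \<in> cube n" and x': "x' \<in> cube n"
  shows "i < n \<Longrightarrow> x i \<noteq> x' i \<Longrightarrow> \<exists>j<n. matvec n Ah x j \<noteq> matvec n Ah x' j \<and> i \<in> ancs j"
proof (induction "n - i" arbitrary: i rule: less_induct)
  case less
  show ?case
  proof (cases "matvec n Ah x i \<noteq> matvec n Ah x' i")
    case True thus ?thesis using less.prems ancs_self by blast
  next
    case False
    hence "x (2*i+1) \<noteq> x' (2*i+1) \<or> x (2*i+2) \<noteq> x' (2*i+2)"
      using step[OF x, of i] step[OF x', of i] less.prems by auto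
    then obtain c where c: "c = 2*i+1 \<or> c = 2*i+2" "x c \<noteq> x' c" by blast
    have "c < n" using c(2) cubeD[OF x, of c] cubeD[OF x', of c] by auto
    have "n - c < n - i" using c(1) \<open>c < n\<close> by auto
    then obtain j where "j < n" "matvec n Ah x j \<noteq> matvec n Ah x' j" "c \<in> ancs j"
      using less.hyps[of c] \<open>c < n\<close> c(2) by blast
    thus ?thesis using ancs_parent c(1) by blast
  qed
qed

lemma cover_fwd:
  assumes x: "x \<in> cube n" and x': "x' \<in> cube n"
    and j: "j < n" "matvec n Ah x j \<noteq> matvec n Ah x' j"
  shows "\<exists>c<n. x c \<noteq> x' c \<and> j \<in> {c, (c - 1) div 2}"
proof -
  have "x j \<noteq> x' j \<or> x (2*j+1) \<noteq> x' (2*j+1) \<or> x (2*j+2) \<noteq> x' (2*j+2)"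
    using step[OF x, of j] step[OF x', of j] j by auto
  then obtain c where c: "c = j \<or> c = 2*j+1 \<or> c = 2*j+2" "x c \<noteq> x' c" by blast
  have "c < n" using c(2) cubeD[OF x, of c] cubeD[OF x', of c] by auto
  moreover have "j \<in> {c, (c - 1) div 2}" using c(1) by auto
  ultimately show ?thesis using c(2) by blast
qed

lemma lip_fwd:
  assumes x: "x \<in> cube n" and x': "x' \<in> cube n"
  shows "hamming n (matvec n Ah x) (matvec n Ah x') \<le> 2 * hamming n x x'"
proof -
  let ?D = "{i. i < n \<and> x i \<noteq> x' i}"
  let ?E = "{i. i < n \<and> matvec n Ah x i \<noteq> matvec n Ah x' i}"
  have fD: "finite ?D" by simp
  have "?E \<subseteq> (\<Union>c\<in>?D. {c, (c - 1) div 2})"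
    using cover_fwd[OF x x'] by blast
  hence "card ?E \<le> card (\<Union>c\<in>?D. {c, (c - 1) div 2})"
    by (intro card_mono) auto
  also have "\<dots> \<le> (\<Sum>c\<in>?D. card {c, (c - 1) div 2})"
    by (rule card_UN_le[OF fD])
  also have "\<dots> \<le> of_nat (card ?D) * 2"
    by (rule sum_bounded_above) (simp add: card_insert_if)
  finally show ?thesis unfolding hamming_def by simp
qed

lemma lip_inv:
  assumes x: "x \<in> cube n" and x': "x' \<in> cube n" and K: "n < 2^K"
  shows "hamming n x x' \<le> K * hamming n (matvec n Ah x) (matvec n Ah x')"
proof -
  let ?D = "{i. i < n \<and> x i \<noteq> x' i}"
  let ?E = "{i. i < n \<and> matvec n Ah x i \<noteq> matvec n Ah x' i}"
  have fE: "finite ?E" by simp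
  have "?D \<subseteq> (\<Union>j\<in>?E. ancs j)"
    using cover_inv[OF x x'] by blast
  hence "card ?D \<le> card (\<Union>j\<in>?E. ancs j)"
    by (intro card_mono) (auto simp: ancs_finite)
  also have "\<dots> \<le> (\<Sum>j\<in>?E. card (ancs j))"
    by (rule card_UN_le[OF fE])
  also have "\<dots> \<le> of_nat (card ?E) * K"
    by (rule sum_bounded_above) (use K in \<open>auto intro: ancs_card\<close>)
  finally show ?thesis unfolding hamming_def by (simp add: mult.commute)
qed

lemma inj_A: "inj_on (matvec n Ah) (cube n)"
proof (rule inj_onI)
  fix x x' assume x: "x \<in> cube n" and x': "x' \<in> cube n" and e: "matvec n Ah x = matvec n Ah x'"
  show "x = x'"
  proof
    fix i show "x i = x' i"
      using cover_inv[OF x x', of i] e cubeD[OF x, of i] cubeD[OF x', of i] by auto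
  qed
qed

lemma bij_A: "bij_betw (matvec n Ah) (cube n) (cube n)"
proof -
  have sub: "matvec n Ah ` cube n \<subseteq> cube n" by (auto simp: cube_def matvec_def)
  show ?thesis unfolding bij_betw_def
    using endo_inj_surj[OF cube_finite sub inj_A] inj_A by blast
qed


lemma pair_sum: fixes g :: "nat \<Rightarrow> int" and n :: nat
  shows "(\<Sum>i<n. g (2*i) + g (2*i+1)) = (\<Sum>j<2*n. g j)"
  by (induction n) (simp_all add: algebra_simps)

lemma sum_ext:
  assumes x: "x \<in> cube n" and "n \<le> m"
  shows "(\<Sum>j<m. of_bool (x j) :: int) = (\<Sum>j<n. of_bool (x j))"
  using assms(2)
proof (induction m)
  case 0 thus ?case by simp
next
  case (Suc m)
  show ?case
  proof (cases "n = Suc m")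
    case True thus ?thesis by simp
  next
    case False
    hence "n \<le> m" using Suc.prems by simp
    thus ?thesis using Suc.IH cubeD[OF x, of m] by simp
  qed
qed

lemma parity:
  assumes x: "x \<in> cube n"
  shows "Dictator x = XOR n (matvec n Ah x)"
proof -
  let ?b = "\<lambda>j. of_bool (x j) :: int"
  have c: "int (card {i. i < n \<and> matvec n Ah x i}) = (\<Sum>i<n. of_bool (matvec n Ah x i))"
  proof -
    have "{i. i < n \<and> matvec n Ah x i} = {..<n} \<inter> {i. matvec n Ah x i}" by auto
    thus ?thesis by simp
  qed
  have t: "(\<Sum>i<n. of_bool (matvec n Ah x i)) = (\<Sum>i<n. (?b i + ?b (2*i+1) + ?b (2*i+2)) mod 2)"
    by (rule sum.cong) (auto simp: step[OF x])
  have "(\<Sum>i<n. (?b i + ?b (2*i+1) + ?b (2*i+2)) mod 2) mod 2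
      = (\<Sum>i<n. ?b i + ?b (2*i+1) + ?b (2*i+2)) mod 2"
    by (rule mod_sum_eq)
  also have "(\<Sum>i<n. ?b i + ?b (2*i+1) + ?b (2*i+2)) = (\<Sum>i<n. ?b i) + (\<Sum>i<n. ?b (2*i+1) + ?b (2*i+2))"
    by (simp add: sum.distrib add.assoc)
  also have "(\<Sum>i<n. ?b (2*i+1) + ?b (2*i+2)) = (\<Sum>j<2*n. ?b (Suc j))"
    using pair_sum[where n=n and g="\<lambda>j. ?b (Suc j)"] by simp
  also have "\<dots> = (\<Sum>j<Suc (2*n). ?b j) - ?b 0"
    by (subst sum.lessThan_Suc_shift) simp
  also have "(\<Sum>j<Suc (2*n). ?b j) = (\<Sum>j<n. ?b j)"
    by (rule sum_ext[OF x]) simp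
  finally have m: "(\<Sum>i<n. of_bool (matvec n Ah x i)) mod 2 = (2 * (\<Sum>j<n. ?b j) - ?b 0) mod 2"
    using t by simp
  have "(2 * (\<Sum>j<n. ?b j) - ?b 0) mod 2 = ?b 0"
    by (cases "x 0") (simp_all add: mod_diff_eq[symmetric])
  hence "int (card {i. i < n \<and> matvec n Ah x i}) mod 2 = ?b 0" using m c by simp
  thus ?thesis unfolding Dictator_def XOR_def
    by (cases "x 0") (auto simp: odd_iff_mod_2_eq_one, presburger+)
qed


lemma depends: "output_depends_on_at_most n 3 (matvec n Ah)"
  unfolding output_depends_on_at_most_def
proof (intro allI impI)
  fix i assume i: "i < n"
  let ?S = "{i, 2*i+1, 2*i+2} \<inter> {..<n}"
  have "card ?S \<le> card {i, 2*i+1, 2*i+2}" by (rule card_mono) auto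
  also have "\<dots> \<le> 3" by (simp add: card_insert_if)
  finally have cS: "card ?S \<le> 3" .
  have H: "\<forall>x\<in>cube n. \<forall>y\<in>cube n. (\<forall>j\<in>?S. x j = y j) \<longrightarrow> matvec n Ah x i = matvec n Ah y i"
  proof (intro ballI impI)
    fix x y assume x: "x \<in> cube n" and y: "y \<in> cube n" and a: "\<forall>j\<in>?S. x j = y j"
    have "\<And>c. c \<in> {i, 2*i+1, 2*i+2} \<Longrightarrow> x c = y c"
    proof -
      fix c assume c: "c \<in> {i, 2*i+1, 2*i+2}"
      show "x c = y c"
      proof (cases "c < n")
        case True thus ?thesis using a c by auto
      next
        case False thus ?thesis using cubeD[OF x] cubeD[OF y] by simp
      qed
    qed
    thus "matvec n Ah x i = matvec n Ah y i" by (simp add: step[OF x] step[OF y])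
  qed
  show "\<exists>S\<subseteq>{..<n}. card S \<le> 3 \<and> (\<forall>x\<in>cube n. \<forall>y\<in>cube n. (\<forall>j\<in>S. x j = y j) \<longrightarrow> matvec n Ah x i = matvec n Ah y i)"
    apply (rule exI[of _ ?S])
    using cS H by blast
qed

lemma log_bound:
  assumes "n \<ge> 2"
  obtains K where "n < 2^K" "real K \<le> 4 * ln (real n)"
proof -
  obtain k where k: "2^k \<le> n" "n < 2^(k+1)" using ex_power_ivl1[of 2 n] assms by auto
  have k1: "k \<ge> 1" using k assms by (cases k) auto
  have "real k * ln 2 = ln (2^k)" by (simp add: ln_realpow)
  also have "\<dots> \<le> ln (real n)"
  proof -
    have r: "(2::real)^k \<le> real n" using k(1) by (metis of_nat_le_iff of_nat_numeral of_nat_power)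
    show ?thesis using r assms by (subst ln_le_cancel_iff) auto
  qed
  finally have "real k * ln 2 \<le> ln (real n)" .
  moreover have "real k * (1/2) \<le> real k * ln 2" using ln2_ge by (intro mult_left_mono) auto
  ultimately have a: "real k * (1/2) \<le> ln (real n)" by linarith
  have "real k \<ge> 1" using k1 by simp
  hence "real (k+1) \<le> 4 * ln (real n)" using a by simp
  thus ?thesis using that k(2) by blast
qed

theorem theorem2:
  shows "\<exists>C::real. \<forall>n::nat. n \<ge> 2 \<longrightarrow>
    (\<exists>A :: nat \<Rightarrow> nat \<Rightarrow> bool.
       is_mapping n Dictator (XOR n) (matvec n A) \<and>
       output_depends_on_at_most n 3 (matvec n A) \<and>
       lipschitz_cube n 2 (matvec n A) \<and>
       lipschitz_cube n (C * ln (real n)) (the_inv_into (cube n) (matvec n A)))"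
proof (intro exI[of _ 4] allI impI)
  fix n :: nat assume n: "n \<ge> 2"
  obtain K where K: "n < 2^K" "real K \<le> 4 * ln (real n)" using log_bound[OF n] by blast
  have m: "is_mapping n Dictator (XOR n) (matvec n Ah)"
    unfolding is_mapping_def using bij_A parity by blast
  have l: "lipschitz_cube n 2 (matvec n Ah)"
    unfolding lipschitz_cube_def
  proof (intro ballI)
    fix x y assume "x \<in> cube n" "y \<in> cube n"
    from lip_fwd[OF this] show "real (hamming n (matvec n Ah x) (matvec n Ah y)) \<le> 2 * real (hamming n x y)"
      by linarith
  qed
  have li: "lipschitz_cube n (4 * ln (real n)) (the_inv_into (cube n) (matvec n Ah))"
    unfolding lipschitz_cube_def
  proof (intro ballI)
    fix y y' assume y: "y \<in> cube n" and y': "y' \<in> cube n"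
    let ?g = "the_inv_into (cube n) (matvec n Ah)"
    have b: "bij_betw (matvec n Ah) (cube n) (cube n)" by (rule bij_A)
    have gy: "?g y \<in> cube n" "?g y' \<in> cube n"
      using the_inv_into_into[OF inj_A] y y' bij_betw_imp_surj_on[OF b] by auto
    have fy: "matvec n Ah (?g y) = y" "matvec n Ah (?g y') = y'"
      using f_the_inv_into_f_bij_betw[OF b] y y' by auto
    have "hamming n (?g y) (?g y') \<le> K * hamming n y y'"
      using lip_inv[OF gy K(1)] fy by simp
    hence "real (hamming n (?g y) (?g y')) \<le> real K * real (hamming n y y')"
      by (metis of_nat_le_iff of_nat_mult)
    also have "\<dots> \<le> 4 * ln (real n) * real (hamming n y y')"
      using K(2) by (intro mult_right_mono) auto
    finally show "real (hamming n (?g y) (?g y')) \<le> 4 * ln (real n) * real (hamming n y y')" .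
  qed
  show "\<exists>A. is_mapping n Dictator (XOR n) (matvec n A) \<and>
       output_depends_on_at_most n 3 (matvec n A) \<and>
       lipschitz_cube n 2 (matvec n A) \<and>
       lipschitz_cube n (4 * ln (real n)) (the_inv_into (cube n) (matvec n A))"
    using m depends l li by blast
qed

end
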